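(* Let $(M,d)$ be a metric space and let $T:M\to M$ be a surjective uniformly asymptotically regular mapping. Then $T$ is the identity mapping on $M$.
   Context: A mapping $T:M\to M$ on a metric space $(M,d)$ is uniformly asymptotically regular (UAR) if $\lim_{n\to\infty}\sup_{x\in M} d(T^{n+1}x,T^{n}x)=0$, where $T^n$ is the $n$-fold composition of $T$. *)

theory Defs
  imports "HOL-Analysis.Analysis"
begin

text \<open>Uniform asymptotic regularity: the supremum over all points of
  d(T^(n+1) x, T^n x) tends to 0. The supremum is taken in the extended reals,
  so that it is meaningful even when the set of distances is unbounded.\<close>
definition uar :: "('a::metric_space \<Rightarrow> 'a) \<Rightarrow> bool" where
  "uar T \<longleftrightarrow>
     ((\<lambda>n. SUP x. ereal (dist ((T ^^ Suc n) x) ((T ^^ n) x))) \<longlonglongrightarrow> 0)"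

end

theory Submission
  imports Defs
begin

theorem proposition2p2:
  fixes T :: "'a::metric_space \<Rightarrow> 'a"
  assumes "surj T" and "uar T"
  shows "T = id"
proof -
  define c where "c = (SUP y. ereal (dist (T y) y))"
  have eq: "(SUP x. ereal (dist ((T ^^ Suc n) x) ((T ^^ n) x))) = c" for n
  proof -
    have s: "surj (T ^^ n)" using assms(1) by (simp add: surj_fn)
    have "(SUP x. ereal (dist ((T ^^ Suc n) x) ((T ^^ n) x)))
        = (SUP x. (\<lambda>y. ereal (dist (T y) y)) ((T ^^ n) x))" by simp
    also have "\<dots> = (SUP y\<in>range (T ^^ n). ereal (dist (T y) y))"
      by (simp add: image_image)
    also have "\<dots> = c" using s by (simp add: c_def)
    finally show ?thesis .
  qed
  have "(\<lambda>n::nat. c) \<longlonglongrightarrow> 0" using assms(2) unfolding uar_def eq .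
  hence c0: "c = 0" by (simp add: LIMSEQ_const_iff)
  show ?thesis
  proof
    fix y
    have "ereal (dist (T y) y) \<le> c" unfolding c_def by (rule SUP_upper) simp
    hence "dist (T y) y \<le> 0" using c0 by simp
    thus "T y = id y" by simp
  qed
qed

end
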